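(* Let $(X,d,m)$ be a metric measure space and let $p\ge1$. Let $A\subseteq X$ be such that $m(A)=0$. Then $\mathrm{AM}_p(A,m)\le m^{+,p}(A)$.
   Context: Metric measure space: complete separable metric space with nonnegative Borel measure finite on bounded sets. Minkowski content: $m^{+,p}(A)=\liminf_{r\to0}m(\overline B_r(A)\setminus A)/r^p$ with $\overline B_r(A)=\{z:d(z,A)\le r\}$. Approximate modulus: $\mathrm{AM}_p(A,m)=\inf\liminf_j\int\rho_j^pdm$, infimum over sequences of Borel $\rho_j:X\to[0,\infty]$ with $\liminf_j\int_\gamma\rho_j\,ds\ge1$ for every continuous curve $\gamma:[0,1]\to X$ whose image meets $A$. *)

theory Defs
  imports "HOL-Analysis.Analysis"
begin

definition outer_meas :: "'a measure \<Rightarrow> 'a set \<Rightarrow> ennreal" where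
  "outer_meas M S = (INF B \<in> {B \<in> sets M. S \<subseteq> B}. emeasure M B)"

text \<open>Closed r-neighbourhood {z. d(z,A) \<le> r}; d(z,{}) = +infinity, so empty for A = {}.\<close>
definition closed_nbhd :: "'a::metric_space set \<Rightarrow> real \<Rightarrow> 'a set" where
  "closed_nbhd A r = {z. A \<noteq> {} \<and> infdist z A \<le> r}"

definition minkowski_content :: "'a::metric_space measure \<Rightarrow> real \<Rightarrow> 'a set \<Rightarrow> ennreal" where
  "minkowski_content M p A =
     Liminf (at_right 0) (\<lambda>r. outer_meas M (closed_nbhd A r - A) / ennreal (r powr p))"

definition curve_var :: "(real \<Rightarrow> 'a::metric_space) \<Rightarrow> real \<Rightarrow> real \<Rightarrow> ennreal" where
  "curve_var g a b = (SUP ts \<in> {ts. sorted ts \<and> set ts \<subseteq> {a..b}}.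
       ennreal (\<Sum>i < length ts - 1. dist (g (ts ! i)) (g (ts ! Suc i))))"

definition rectifiable_curve :: "(real \<Rightarrow> 'a::metric_space) \<Rightarrow> bool" where
  "rectifiable_curve g \<longleftrightarrow> continuous_on {0..1} g \<and> curve_var g 0 1 < \<infinity>"

definition arclen :: "(real \<Rightarrow> 'a::metric_space) \<Rightarrow> real \<Rightarrow> real" where
  "arclen g t = enn2real (curve_var g 0 (max 0 (min t 1)))"

definition line_integral :: "('a::metric_space \<Rightarrow> ennreal) \<Rightarrow> (real \<Rightarrow> 'a) \<Rightarrow> ennreal" where
  "line_integral \<rho> g = (\<integral>\<^sup>+ t. \<rho> (g t) * indicator {0..1} t \<partial>interval_measure (arclen g))"

definition enn_powr :: "ennreal \<Rightarrow> real \<Rightarrow> ennreal" where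
  "enn_powr x p = (if x = \<infinity> then \<infinity> else ennreal (enn2real x powr p))"

definition test_curves :: "'a::metric_space set \<Rightarrow> (real \<Rightarrow> 'a) set" where
  "test_curves A = {g. rectifiable_curve g \<and> g ` {0..1} \<inter> A \<noteq> {} \<and>
                       (\<exists>s\<in>{0..1}. \<exists>t\<in>{0..1}. g s \<noteq> g t)}"

definition AM_admissible :: "'a::metric_space measure \<Rightarrow> 'a set \<Rightarrow> (nat \<Rightarrow> 'a \<Rightarrow> ennreal) \<Rightarrow> bool" where
  "AM_admissible M A \<rho> \<longleftrightarrow> (\<forall>j. \<rho> j \<in> borel_measurable M) \<and>
     (\<forall>g \<in> test_curves A. Liminf sequentially (\<lambda>j. line_integral (\<rho> j) g) \<ge> 1)"

definition approx_modulus :: "real \<Rightarrow> 'a::metric_space set \<Rightarrow> 'a measure \<Rightarrow> ennreal" where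
  "approx_modulus p A M = (INF \<rho> \<in> {\<rho>. AM_admissible M A \<rho>}.
      Liminf sequentially (\<lambda>j. \<integral>\<^sup>+ x. enn_powr (\<rho> j x) p \<partial>M))"

definition metric_measure_space :: "'a::polish_space measure \<Rightarrow> bool" where
  "metric_measure_space M \<longleftrightarrow> sets M = sets borel \<and>
     (\<forall>S \<in> sets M. bounded S \<longrightarrow> emeasure M S < \<infinity>)"

end

theory Submission
  imports Defs
begin

fun psum :: "(real \<Rightarrow> 'a::metric_space) \<Rightarrow> real list \<Rightarrow> real" where
  "psum g (x # y # xs) = dist (g x) (g y) + psum g (y # xs)"
| "psum g _ = 0"

lemma psum_eq: "(\<Sum>i < length ts - 1. dist (g (ts ! i)) (g (ts ! Suc i))) = psum g ts"
proof (induction g ts rule: psum.induct)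
  case (1 g x y xs)
  have "length (x # y # xs) - 1 = Suc (length (y # xs) - 1)" by simp
  then show ?case using 1 by (simp only: sum.lessThan_Suc_shift) simp
qed auto

lemma psum_nonneg: "psum g ts \<ge> 0"
  by (induction g ts rule: psum.induct) auto

lemma psum_Cons_ge: "psum g ys \<le> psum g (x # ys)"
  by (cases ys) (auto simp: psum_nonneg)

lemma psum_append_ge: "psum g xs + psum g ys \<le> psum g (xs @ ys)"
proof (induction g xs rule: psum.induct)
  case ("2_2" g v)
  then show ?case by (auto simp: psum_Cons_ge)
qed auto

lemma psum_split: "psum g (xs @ ys) \<le> psum g (xs @ [b]) + psum g (b # ys)"
proof (induction g xs rule: psum.induct)
  case ("2_1" g)
  then show ?case by (simp add: psum_Cons_ge)
next
  case ("2_2" g x)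
    show ?case
    proof (cases ys)
      case Nil then show ?thesis by simp
    next
      case (Cons y ys')
      then show ?thesis by (simp add: dist_triangle)
    qed
qed auto

lemma dropWhile_gt: "sorted ts \<Longrightarrow> y \<in> set (dropWhile (\<lambda>x. x \<le> b) ts) \<Longrightarrow> b < (y::real)"
  by (induction ts) (auto split: if_splits)

lemma psum_max:
  assumes "sorted ts" "\<forall>x\<in>set ts. x = t \<or> s < x" "t \<le> s"
  shows "psum g ts \<le> psum g (map (max s) ts) + dist (g t) (g s)"
  using assms
proof (induction g ts rule: psum.induct)
  case (1 g x y xs)
  have IH: "psum g (y # xs) \<le> psum g (map (max s) (y # xs)) + dist (g t) (g s)"
    using 1 by auto
  show ?case
  proof (cases "s < x")
    case True
    then have "\<forall>z\<in>set (x # y # xs). s < z" using "1.prems" by auto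
    then have "map (max s) (x # y # xs) = x # y # xs" by (intro map_idI) auto
    then show ?thesis by simp
  next
    case False
    then have xt: "x = t" using "1.prems" by auto
    show ?thesis
    proof (cases "s < y")
      case True
      then have "\<forall>z\<in>set (y # xs). s < z" using "1.prems" by auto
      then have e: "map (max s) (y # xs) = y # xs" by (intro map_idI) auto
      have "dist (g t) (g y) \<le> dist (g s) (g y) + dist (g t) (g s)"
        by (metis add.commute dist_triangle)
      then show ?thesis using e xt "1.prems" True by simp
    next
      case False
      then have "y = t" using "1.prems" by auto
      then show ?thesis using IH xt by simp
    qed
  qed
qed auto


lemma cv_alt: "curve_var g a b = (SUP ts\<in>{ts. sorted ts \<and> set ts \<subseteq> {a..b}}. ennreal (psum g ts))"
  unfolding curve_var_def psum_eq ..

lemma cv_ge: "sorted ts \<Longrightarrow> set ts \<subseteq> {a..b} \<Longrightarrow> ennreal (psum g ts) \<le> curve_var g a b"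
  unfolding cv_alt by (rule SUP_upper) auto

lemma cv_dist: "a \<le> b \<Longrightarrow> ennreal (dist (g a) (g b)) \<le> curve_var g a b"
  using cv_ge[of "[a,b]" a b g] by simp

lemma cv_mono: "c \<le> a \<Longrightarrow> b \<le> d \<Longrightarrow> curve_var g a b \<le> curve_var g c d"
  unfolding cv_alt by (rule SUP_subset_mono) auto

lemma cv_super:
  assumes "a \<le> b" "b \<le> c"
  shows "curve_var g a b + curve_var g b c \<le> curve_var g a c"
proof -
  let ?P = "\<lambda>a b. {ts. sorted ts \<and> set ts \<subseteq> {a..b}}"
  have ne: "?P a b \<noteq> {}" "?P b c \<noteq> {}" by (auto intro!: exI[of _ "[]"])
  have "curve_var g a b + curve_var g b c
      = (SUP xs\<in>?P a b. ennreal (psum g xs) + curve_var g b c)"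
    unfolding cv_alt[of g a b] by (rule ennreal_SUP_add_left[symmetric, OF ne(1)])
  also have "\<dots> \<le> curve_var g a c"
  proof (rule SUP_least)
    fix xs assume xs: "xs \<in> ?P a b"
    have "ennreal (psum g xs) + curve_var g b c = (SUP ys\<in>?P b c. ennreal (psum g xs) + ennreal (psum g ys))"
      unfolding cv_alt[of g b c] using ennreal_SUP_add_right[OF ne(2)] by metis
    also have "\<dots> \<le> curve_var g a c"
    proof (rule SUP_least)
      fix ys assume ys: "ys \<in> ?P b c"
      have "sorted (xs @ ys)" using xs ys unfolding sorted_append
        by (smt (verit, best) atLeastAtMost_iff mem_Collect_eq subset_eq)
      moreover have "set (xs @ ys) \<subseteq> {a..c}" using xs ys assms by auto
      ultimately have "ennreal (psum g (xs @ ys)) \<le> curve_var g a c" by (rule cv_ge)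
      moreover have "ennreal (psum g xs) + ennreal (psum g ys) \<le> ennreal (psum g (xs @ ys))"
        using psum_append_ge[of g xs ys] psum_nonneg[of g]
        by (simp add: ennreal_plus[symmetric] del: ennreal_plus)
      ultimately show "ennreal (psum g xs) + ennreal (psum g ys) \<le> curve_var g a c" by simp
    qed
    finally show "ennreal (psum g xs) + curve_var g b c \<le> curve_var g a c" .
  qed
  finally show ?thesis .
qed

lemma cv_sub:
  assumes "a \<le> b" "b \<le> c"
  shows "curve_var g a c \<le> curve_var g a b + curve_var g b c"
  unfolding cv_alt[of g a c]
proof (rule SUP_least)
  fix ts assume ts: "ts \<in> {ts. sorted ts \<and> set ts \<subseteq> {a..c}}"
  define xs where "xs = takeWhile (\<lambda>x. x \<le> b) ts"
  define ys where "ys = dropWhile (\<lambda>x. x \<le> b) ts"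
  have tsxy: "ts = xs @ ys" unfolding xs_def ys_def by simp
  have s1: "sorted (xs @ [b])" using ts unfolding xs_def
    by (auto simp: sorted_append sorted_takeWhile dest: set_takeWhileD)
  have s2: "sorted (b # ys)" using ts unfolding ys_def
    by (auto simp: sorted_dropWhile dest: dropWhile_gt intro: less_imp_le)
  have st1: "set (xs @ [b]) \<subseteq> {a..b}" using ts assms unfolding xs_def
    by (auto dest!: set_takeWhileD)
  have st2: "set (b # ys) \<subseteq> {b..c}" using ts assms unfolding ys_def
  proof (clarsimp)
    fix x assume x: "x \<in> set (dropWhile (\<lambda>x. x \<le> b) ts)"
    have "b < x" using dropWhile_gt[OF _ x] ts by auto
    moreover have "x \<in> set ts" using x set_dropWhileD by metis
    ultimately show "b \<le> x \<and> x \<le> c" using ts by auto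
  qed
  have "ennreal (psum g ts) \<le> ennreal (psum g (xs @ [b]) + psum g (b # ys))"
    using psum_split[of g xs ys b] tsxy by (simp add: ennreal_leI)
  also have "\<dots> = ennreal (psum g (xs @ [b])) + ennreal (psum g (b # ys))"
    by (simp add: psum_nonneg)
  also have "\<dots> \<le> curve_var g a b + curve_var g b c"
    by (intro add_mono cv_ge s1 s2 st1 st2)
  finally show "ennreal (psum g ts) \<le> curve_var g a b + curve_var g b c" .
qed

lemma cv_add:
  assumes "a \<le> b" "b \<le> c"
  shows "curve_var g a c = curve_var g a b + curve_var g b c"
  using cv_sub[OF assms] cv_super[OF assms] by (rule antisym)


lemma cv_fin: "rectifiable_curve g \<Longrightarrow> 0 \<le> a \<Longrightarrow> b \<le> 1 \<Longrightarrow> curve_var g a b < \<infinity>"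
  unfolding rectifiable_curve_def using cv_mono[of 0 a b 1 g] by (auto simp: top_unique)

lemma arclen_eq: "0 \<le> t \<Longrightarrow> t \<le> 1 \<Longrightarrow> arclen g t = enn2real (curve_var g 0 t)"
  unfolding arclen_def by simp

lemma arclen_diff:
  assumes "rectifiable_curve g" "0 \<le> a" "a \<le> b" "b \<le> 1"
  shows "arclen g b - arclen g a = enn2real (curve_var g a b)"
proof -
  have "curve_var g 0 b = curve_var g 0 a + curve_var g a b" using cv_add assms by auto
  moreover have "curve_var g 0 a < \<infinity>" "curve_var g a b < \<infinity>"
    using cv_fin[OF assms(1), of 0 a] cv_fin[OF assms(1), of a b] assms by auto
  ultimately have "enn2real (curve_var g 0 b) = enn2real (curve_var g 0 a) + enn2real (curve_var g a b)"
    by (simp add: enn2real_plus)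
  then show ?thesis using assms by (simp add: arclen_eq)
qed

lemma arclen_mono:
  assumes "rectifiable_curve g" "x \<le> y"
  shows "arclen g x \<le> arclen g y"
  unfolding arclen_def
proof (rule enn2real_mono)
  show "curve_var g 0 (max 0 (min y 1)) < top" using cv_fin[OF assms(1), of 0 "max 0 (min y 1)"] by simp
qed (use assms in \<open>auto intro!: cv_mono\<close>)

lemma enn2real_ge: "ennreal x \<le> y \<Longrightarrow> y < \<infinity> \<Longrightarrow> 0 \<le> x \<Longrightarrow> x \<le> enn2real y"
  using enn2real_mono[of "ennreal x" y] by simp

lemma cv_small:
  assumes rg: "rectifiable_curve g" and t: "0 \<le> t" "t < 1" and e: "\<epsilon> > 0"
  shows "\<exists>\<delta>>0. t + \<delta> \<le> 1 \<and> enn2real (curve_var g t (t + \<delta>)) < \<epsilon>"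
proof -
  define L where "L = enn2real (curve_var g t 1)"
  have fin1: "curve_var g t 1 < \<infinity>" using cv_fin rg t by auto
  then have cvL: "curve_var g t 1 = ennreal L" unfolding L_def
    by (simp add: ennreal_enn2real_if less_top)
  show ?thesis
  proof (cases "L < \<epsilon>")
    case True
    then show ?thesis using t L_def by (intro exI[of _ "1 - t"]) auto
  next
    case False
    then have "ennreal (L - \<epsilon>/2) < curve_var g t 1" using cvL e
      by (subst cvL) (simp add: ennreal_less_iff)
    then obtain ts where ts: "sorted ts" "set ts \<subseteq> {t..1}" and
      pts: "ennreal (L - \<epsilon>/2) < ennreal (psum g ts)"
      unfolding cv_alt[of g t 1] less_SUP_iff by auto
    have pts': "L - \<epsilon>/2 < psum g ts" using pts False e
      by (simp add: ennreal_less_iff psum_nonneg)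
    define m where "m = Min (insert 1 {x\<in>set ts. t < x})"
    have mfin: "finite (insert 1 {x\<in>set ts. t < x})" by auto
    have mt: "t < m" unfolding m_def using t by (subst Min_gr_iff) auto
    have m1: "m \<le> 1" unfolding m_def using mfin by (intro Min_le) auto
    have mle: "\<And>x. x \<in> set ts \<Longrightarrow> t < x \<Longrightarrow> m \<le> x" unfolding m_def using mfin by (intro Min_le) auto
    have "continuous_on {0..1} g" using rg unfolding rectifiable_curve_def by auto
    then obtain d1 where d1: "d1 > 0" "\<And>s. s \<in> {0..1} \<Longrightarrow> dist s t < d1 \<Longrightarrow> dist (g s) (g t) < \<epsilon>/2"
      unfolding continuous_on_iff using t e by (metis atLeastAtMost_iff half_gt_zero less_eq_real_def)
    define \<delta> where "\<delta> = min d1 (m - t) / 2"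
    define s where "s = t + \<delta>"
    have dpos: "\<delta> > 0" unfolding \<delta>_def using d1 mt by auto
    have sm: "s < m" unfolding s_def \<delta>_def using d1 mt by (simp add: min_def field_simps)
    have s01: "s \<in> {0..1}" using sm m1 dpos t unfolding s_def by auto
    have dst: "dist (g s) (g t) < \<epsilon>/2"
      using d1(2)[OF s01] dpos d1(1) unfolding s_def \<delta>_def dist_real_def by auto
    have sorted': "sorted (map (max s) ts)"
      by (rule sorted_map_mono[OF ts(1)]) (auto simp: mono_on_def)
    have set': "set (map (max s) ts) \<subseteq> {s..1}" using ts(2) s01 by auto
    have cond: "\<forall>x\<in>set ts. x = t \<or> s < x"
    proof
      fix x assume x: "x \<in> set ts"
      show "x = t \<or> s < x"
      proof (cases "t < x")
        case True then show ?thesis using mle[OF x] sm by auto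
      next
        case False then show ?thesis using ts(2) x by force
      qed
    qed
    have ts_le: "psum g ts \<le> psum g (map (max s) ts) + dist (g t) (g s)"
      by (rule psum_max[OF ts(1) cond]) (use dpos s_def in auto)
    have fin2: "curve_var g s 1 < \<infinity>" using cv_fin rg s01 by auto
    have "psum g (map (max s) ts) \<le> enn2real (curve_var g s 1)"
      by (rule enn2real_ge[OF cv_ge[OF sorted' set'] fin2 psum_nonneg])
    moreover have "L = enn2real (curve_var g t s) + enn2real (curve_var g s 1)"
      unfolding L_def using cv_add[of t s 1 g] s01 dpos s_def cv_fin[OF rg] t
      by (simp add: enn2real_plus)
    ultimately have "enn2real (curve_var g t s) < \<epsilon>"
      using ts_le pts' dst by (simp add: dist_commute)
    then show ?thesis using dpos s01 s_def by (intro exI[of _ \<delta>]) auto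
  qed
qed

lemma arclen_rcont:
  assumes rg: "rectifiable_curve g"
  shows "continuous (at_right a) (arclen g)"
proof -
  have "\<forall>\<epsilon>>0. \<exists>\<delta>>0. arclen g (a + \<delta>) - arclen g a < \<epsilon>"
  proof (intro allI impI)
    fix \<epsilon> :: real assume e: "\<epsilon> > 0"
    consider "a < 0" | "1 \<le> a" | "0 \<le> a" "a < 1" by linarith
    then show "\<exists>\<delta>>0. arclen g (a + \<delta>) - arclen g a < \<epsilon>"
    proof cases
      case 1
      then show ?thesis using e by (intro exI[of _ "-a"]) (auto simp: arclen_def)
    next
      case 2
      then show ?thesis using e by (intro exI[of _ 1]) (auto simp: arclen_def)
    next
      case 3
      obtain \<delta> where "\<delta> > 0" "a + \<delta> \<le> 1" "enn2real (curve_var g a (a + \<delta>)) < \<epsilon>"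
        using cv_small[OF rg 3 e] by auto
      then show ?thesis using arclen_diff[OF rg, of a "a + \<delta>"] 3 by (intro exI[of _ \<delta>]) auto
    qed
  qed
  then show ?thesis
    using continuous_at_right_real_increasing[of "arclen g" a] arclen_mono[OF rg] by blast
qed

lemma interval_meas_ge:
  assumes rg: "rectifiable_curve g" and ab: "0 \<le> a" "a \<le> b" "b \<le> 1"
  shows "ennreal (dist (g a) (g b)) \<le> emeasure (interval_measure (arclen g)) {a<..b}"
proof -
  have "emeasure (interval_measure (arclen g)) {a<..b} = ennreal (arclen g b - arclen g a)"
    by (rule emeasure_interval_measure_Ioc[OF ab(2)]) (use arclen_mono[OF rg] arclen_rcont[OF rg] in auto)
  also have "\<dots> = ennreal (enn2real (curve_var g a b))" using arclen_diff[OF rg ab] by simp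
  finally have e: "emeasure (interval_measure (arclen g)) {a<..b} = ennreal (enn2real (curve_var g a b))" .
  have "dist (g a) (g b) \<le> enn2real (curve_var g a b)"
    by (rule enn2real_ge[OF cv_dist[OF ab(2)]]) (use cv_fin[OF rg] ab in auto)
  then show ?thesis unfolding e by (simp add: ennreal_leI)
qed


lemma exit_interval:
  fixes g :: "real \<Rightarrow> 'a::metric_space"
  assumes cont: "continuous_on {0..1} g" and t0: "t0 \<in> {0..1}" and t1: "t1 \<in> {0..1}"
    and r: "0 < r" "r \<le> dist (g t0) (g t1)"
  shows "\<exists>a b. 0 \<le> a \<and> a \<le> b \<and> b \<le> 1 \<and> r \<le> dist (g a) (g b) \<and> (\<forall>t\<in>{a..b}. dist (g t0) (g t) \<le> r)"
proof -
  define \<phi> where "\<phi> = (\<lambda>t. dist (g t0) (g t))"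
  have cphi: "continuous_on {0..1} \<phi>" unfolding \<phi>_def by (intro continuous_intros cont)
  have cphi': "\<And>u v. 0 \<le> u \<Longrightarrow> v \<le> 1 \<Longrightarrow> continuous_on {u..v} \<phi>"
    by (rule continuous_on_subset[OF cphi]) auto
  have phi0: "\<phi> t0 = 0" unfolding \<phi>_def by simp
  consider "t0 < t1" | "t1 < t0" | "t0 = t1" by linarith
  then show ?thesis
  proof cases
    case 1
    define S where "S = {t\<in>{t0..t1}. \<phi> t = r}"
    have "\<exists>x. t0 \<le> x \<and> x \<le> t1 \<and> \<phi> x = r"
      by (rule IVT') (use phi0 r 1 cphi' t0 t1 in \<open>auto simp: \<phi>_def\<close>)
    then have Sne: "S \<noteq> {}" unfolding S_def by auto
    have Scl: "closed S" unfolding S_def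
      by (rule continuous_closed_preimage_constant) (use cphi' t0 t1 in auto)
    have Sbdd: "bdd_below S" unfolding S_def by (rule bdd_belowI[of _ t0]) auto
    define \<tau> where "\<tau> = Inf S"
    have tS: "\<tau> \<in> S" unfolding \<tau>_def by (rule closed_contains_Inf[OF Sne Sbdd Scl])
    have below: "\<forall>t\<in>{t0..\<tau>}. \<phi> t \<le> r"
    proof (rule ccontr)
      assume "\<not> (\<forall>t\<in>{t0..\<tau>}. \<phi> t \<le> r)"
      then obtain t where tt: "t0 \<le> t" "t \<le> \<tau>" "r < \<phi> t" by auto
      have tle: "\<tau> \<le> t1" using tS S_def by auto
      obtain x where x: "t0 \<le> x" "x \<le> t" "\<phi> x = r"
        using IVT'[of \<phi> t0 r t] phi0 r tt cphi'[of t0 t] t0 t1 tle by auto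
      have "x \<in> S" unfolding S_def using x tt tle by auto
      then have "\<tau> \<le> x" unfolding \<tau>_def using Sbdd by (rule cInf_lower)
      then have "x = t" using x tt by auto
      then show False using x tt by auto
    qed
    show ?thesis
      using tS below t0 1 t1 unfolding S_def \<phi>_def
      by (intro exI[of _ t0] exI[of _ \<tau>]) auto
  next
    case 2
    define S where "S = {t\<in>{t1..t0}. \<phi> t = r}"
    have "\<exists>x. t1 \<le> x \<and> x \<le> t0 \<and> \<phi> x = r"
      by (rule IVT2') (use phi0 r 2 cphi' t0 t1 in \<open>auto simp: \<phi>_def\<close>)
    then have Sne: "S \<noteq> {}" unfolding S_def by auto
    have Scl: "closed S" unfolding S_def
      by (rule continuous_closed_preimage_constant) (use cphi' t0 t1 in auto)
    have Sbdd: "bdd_above S" unfolding S_def by (rule bdd_aboveI[of _ t0]) auto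
    define \<tau> where "\<tau> = Sup S"
    have tS: "\<tau> \<in> S" unfolding \<tau>_def by (rule closed_contains_Sup[OF Sne Sbdd Scl])
    have below: "\<forall>t\<in>{\<tau>..t0}. \<phi> t \<le> r"
    proof (rule ccontr)
      assume "\<not> (\<forall>t\<in>{\<tau>..t0}. \<phi> t \<le> r)"
      then obtain t where tt: "\<tau> \<le> t" "t \<le> t0" "r < \<phi> t" by auto
      have tle: "t1 \<le> \<tau>" using tS S_def by auto
      obtain x where x: "t \<le> x" "x \<le> t0" "\<phi> x = r"
        using IVT2'[of \<phi> t0 r t] phi0 r tt cphi'[of t t0] t0 t1 tle by auto
      have "x \<in> S" unfolding S_def using x tt tle by auto
      then have "x \<le> \<tau>" unfolding \<tau>_def using Sbdd by (rule cSup_upper)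
      then have "x = t" using x tt by auto
      then show False using x tt by auto
    qed
    show ?thesis
      using tS below t0 2 t1 unfolding S_def \<phi>_def
      by (intro exI[of _ \<tau>] exI[of _ t0]) (auto simp: dist_commute)
  next
    case 3
    then show ?thesis using r by simp
  qed
qed

lemma line_int_ge:
  fixes g :: "real \<Rightarrow> 'a::metric_space"
  assumes rg: "rectifiable_curve g" and t0: "t0 \<in> {0..1}" "g t0 \<in> A" and t1: "t1 \<in> {0..1}"
    and r: "0 < r" "r \<le> dist (g t0) (g t1)"
    and rho: "\<And>x. x \<in> closed_nbhd A r \<Longrightarrow> ennreal (1/r) \<le> \<rho> x"
  shows "1 \<le> line_integral \<rho> g"
proof -
  have cont: "continuous_on {0..1} g" using rg unfolding rectifiable_curve_def by auto
  obtain a b where ab: "0 \<le> a" "a \<le> b" "b \<le> 1" "r \<le> dist (g a) (g b)"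
    and inb: "\<forall>t\<in>{a..b}. dist (g t0) (g t) \<le> r"
    using exit_interval[OF cont t0(1) t1 r] by blast
  let ?\<mu> = "interval_measure (arclen g)"
  have "1 = ennreal (1/r) * ennreal r" using r by (simp add: ennreal_mult[symmetric])
  also have "\<dots> \<le> ennreal (1/r) * emeasure ?\<mu> {a<..b}"
    using interval_meas_ge[OF rg ab(1-3)] ab(4) by (intro mult_left_mono) (auto intro: order_trans[OF ennreal_leI])
  also have "\<dots> = (\<integral>\<^sup>+ t. ennreal (1/r) * indicator {a<..b} t \<partial>?\<mu>)"
    by (rule nn_integral_cmult_indicator[symmetric]) simp
  also have "\<dots> \<le> line_integral \<rho> g"
    unfolding line_integral_def
  proof (rule nn_integral_mono)
    fix t
    show "ennreal (1/r) * indicator {a<..b} t \<le> \<rho> (g t) * indicator {0..1} t"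
    proof (cases "t \<in> {a<..b}")
      case True
      have "infdist (g t) A \<le> dist (g t) (g t0)" by (rule infdist_le[OF t0(2)])
      also have "\<dots> \<le> r" using inb True by (auto simp: dist_commute)
      finally have "g t \<in> closed_nbhd A r" unfolding closed_nbhd_def using t0 by auto
      then show ?thesis using rho True ab by (auto simp: indicator_def)
    qed simp
  qed
  finally show ?thesis .
qed


lemma null_superset:
  assumes "outer_meas M A = 0"
  shows "\<exists>B\<in>sets M. A \<subseteq> B \<and> emeasure M B = 0"
proof -
  have "\<forall>n::nat. \<exists>B. B \<in> sets M \<and> A \<subseteq> B \<and> emeasure M B < ennreal (1 / Suc n)"
  proof
    fix n :: nat
    have "outer_meas M A < ennreal (1 / Suc n)" using assms by simp
    then show "\<exists>B. B \<in> sets M \<and> A \<subseteq> B \<and> emeasure M B < ennreal (1 / Suc n)"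
      unfolding outer_meas_def INF_less_iff by auto
  qed
  then obtain Bs where Bs: "\<And>n. Bs n \<in> sets M" "\<And>n. A \<subseteq> Bs n" "\<And>n. emeasure M (Bs n) < ennreal (1 / Suc n)"
    by metis
  define B where "B = (\<Inter>n. Bs n)"
  have BM: "B \<in> sets M" unfolding B_def using Bs(1) by auto
  have AB: "A \<subseteq> B" unfolding B_def using Bs(2) by auto
  have "emeasure M B \<le> 0"
  proof (rule ennreal_le_epsilon)
    fix e :: real assume e: "0 < e"
    obtain n where n: "inverse (real (Suc n)) < e" using reals_Archimedean[OF e] by auto
    have "emeasure M B \<le> emeasure M (Bs n)" unfolding B_def by (rule emeasure_mono) (auto simp: Bs(1))
    also have "\<dots> \<le> ennreal (1 / Suc n)" using Bs(3)[of n] by simp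
    also have "\<dots> \<le> ennreal e" using n by (intro ennreal_leI) (simp add: field_simps)
    finally show "emeasure M B \<le> 0 + ennreal e" by simp
  qed
  then show ?thesis using BM AB by auto
qed

lemma closed_nbhd_closed: "closed (closed_nbhd A r)"
proof (cases "A = {}")
  case True
  then show ?thesis unfolding closed_nbhd_def by simp
next
  case False
  then have "closed_nbhd A r = {z. infdist z A \<le> r}" unfolding closed_nbhd_def by auto
  moreover have "closed {z. infdist z A \<le> r}"
    by (intro closed_Collect_le continuous_intros)
  ultimately show ?thesis by simp
qed

lemma AM_le_seq:
  fixes M :: "'a::polish_space measure"
  assumes mms: "metric_measure_space M" and p: "p \<ge> 1"
    and B: "B \<in> sets M" "A \<subseteq> B" "emeasure M B = 0"
    and r: "\<And>j. 0 < r j" "\<And>j. r j < 1 / Suc j"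
  shows "approx_modulus p A M \<le>
    Liminf sequentially (\<lambda>j. outer_meas M (closed_nbhd A (r j) - A) / ennreal (r j powr p))"
proof -
  have sM: "sets M = sets borel" using mms unfolding metric_measure_space_def by auto
  have NM: "\<And>s. closed_nbhd A s \<in> sets M" unfolding sM by (rule borel_closed[OF closed_nbhd_closed])
  define \<rho> where "\<rho> = (\<lambda>j x. \<infinity> * indicator B x + ennreal (1 / r j) * indicator (closed_nbhd A (r j)) x)"
  have meas: "\<And>j. \<rho> j \<in> borel_measurable M"
    unfolding \<rho>_def using B(1) NM by measurable
  have adm: "AM_admissible M A \<rho>"
    unfolding AM_admissible_def
  proof (intro conjI allI ballI meas)
    fix g assume g: "g \<in> test_curves A"
    then have rg: "rectifiable_curve g" unfolding test_curves_def by auto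
    have "g ` {0..1} \<inter> A \<noteq> {}" using g unfolding test_curves_def by blast
    then obtain t0 where t0: "t0 \<in> {0..1}" "g t0 \<in> A" by blast
    obtain s t where st: "s \<in> {0..1}" "t \<in> {0..1}" "g s \<noteq> g t" using g unfolding test_curves_def by blast
    obtain t1 where t1: "t1 \<in> {0..1}" "g t1 \<noteq> g t0"
    proof (cases "g s = g t0")
      case True then show ?thesis using that st by metis
    next
      case False then show ?thesis using that st by metis
    qed
    define d where "d = dist (g t0) (g t1)"
    have d: "d > 0" using t1 unfolding d_def by auto
    obtain n where n: "inverse (real (Suc n)) < d" using reals_Archimedean[OF d] by auto
    have "eventually (\<lambda>j. 1 \<le> line_integral (\<rho> j) g) sequentially"
      unfolding eventually_sequentially
    proof (intro exI allI impI)
      fix j assume j: "n \<le> j"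
      have "1 / real (Suc j) \<le> 1 / real (Suc n)" using j by (simp add: frac_le)
      moreover have "1 / real (Suc n) = inverse (real (Suc n))" by (simp add: divide_inverse)
      ultimately have rj: "r j \<le> d" using r(2)[of j] n by linarith
      show "1 \<le> line_integral (\<rho> j) g"
      proof (rule line_int_ge[OF rg t0 t1(1) r(1)])
        show "r j \<le> dist (g t0) (g t1)" using rj d_def by simp
        fix x assume "x \<in> closed_nbhd A (r j)"
        then show "ennreal (1 / r j) \<le> \<rho> j x" unfolding \<rho>_def by simp
      qed
    qed
    then show "1 \<le> Liminf sequentially (\<lambda>j. line_integral (\<rho> j) g)" by (rule Liminf_bounded)
  qed
  have int_le: "(\<integral>\<^sup>+ x. enn_powr (\<rho> j x) p \<partial>M) \<le> outer_meas M (closed_nbhd A (r j) - A) / ennreal (r j powr p)" for j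
  proof -
    let ?N = "closed_nbhd A (r j)"
    define c where "c = (1 / r j) powr p"
    have c: "c = 1 / (r j powr p)" unfolding c_def using r(1)[of j] by (simp add: powr_divide)
    have pw: "enn_powr (\<rho> j x) p = \<infinity> * indicator B x + ennreal c * indicator (?N - B) x" for x
      unfolding \<rho>_def c_def enn_powr_def using r(1)[of j] by (auto simp: indicator_def)
    have "(\<integral>\<^sup>+ x. enn_powr (\<rho> j x) p \<partial>M) = (\<integral>\<^sup>+ x. \<infinity> * indicator B x + ennreal c * indicator (?N - B) x \<partial>M)"
      by (simp add: pw)
    also have "\<dots> = (\<integral>\<^sup>+ x. \<infinity> * indicator B x \<partial>M) + (\<integral>\<^sup>+ x. ennreal c * indicator (?N - B) x \<partial>M)"
      by (rule nn_integral_add) (use B(1) NM in measurable)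
    also have "\<dots> = ennreal c * emeasure M (?N - B)"
      using B NM by (simp add: nn_integral_cmult_indicator sets.Diff)
    also have "\<dots> \<le> ennreal c * outer_meas M (?N - A)"
    proof (intro mult_left_mono)
      show "emeasure M (?N - B) \<le> outer_meas M (?N - A)"
        unfolding outer_meas_def
      proof (rule INF_greatest)
        fix T assume "T \<in> {T \<in> sets M. ?N - A \<subseteq> T}"
        then show "emeasure M (?N - B) \<le> emeasure M T" using B(2) by (intro emeasure_mono) auto
      qed
    qed simp
    also have "\<dots> = outer_meas M (?N - A) / ennreal (r j powr p)"
      using r(1)[of j] unfolding c divide_ennreal_def
      by (simp add: inverse_ennreal divide_inverse mult.commute)
    finally show ?thesis .
  qed
  have "approx_modulus p A M \<le> Liminf sequentially (\<lambda>j. \<integral>\<^sup>+ x. enn_powr (\<rho> j x) p \<partial>M)"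
    unfolding approx_modulus_def by (rule INF_lower) (use adm in auto)
  also have "\<dots> \<le> Liminf sequentially (\<lambda>j. outer_meas M (closed_nbhd A (r j) - A) / ennreal (r j powr p))"
    by (rule Liminf_mono) (use int_le in auto)
  finally show ?thesis .
qed

theorem lemma3p16:
  fixes M :: "'a::polish_space measure" and A :: "'a set" and p :: real
  assumes "metric_measure_space M" and "p \<ge> 1" and "outer_meas M A = 0"
  shows "approx_modulus p A M \<le> minkowski_content M p A"
proof -
  obtain B where B: "B \<in> sets M" "A \<subseteq> B" "emeasure M B = 0"
    using null_superset[OF assms(3)] by auto
  define f where "f = (\<lambda>r. outer_meas M (closed_nbhd A r - A) / ennreal (r powr p))"
  have mc: "minkowski_content M p A = (SUP e\<in>{0<..}. INF y\<in>({0<..} \<inter> ball 0 e - {0}). f y)"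
    unfolding minkowski_content_def f_def by (rule Liminf_within)
  show ?thesis
  proof (rule dense_ge)
    fix c assume c: "minkowski_content M p A < c"
    have "\<forall>n::nat. \<exists>y. y \<in> {0<..} \<inter> ball 0 (1 / Suc n) - {0} \<and> f y < c"
    proof
      fix n :: nat
      have "(INF y\<in>({0<..} \<inter> ball 0 (1 / Suc n) - {0}). f y) \<le> minkowski_content M p A"
        unfolding mc by (rule SUP_upper) simp
      then have "(INF y\<in>({0<..} \<inter> ball 0 (1 / Suc n) - {0}). f y) < c" using c by simp
      then show "\<exists>y. y \<in> {0<..} \<inter> ball 0 (1 / Suc n) - {0} \<and> f y < c"
        unfolding INF_less_iff by auto
    qed
    then obtain r where r: "\<And>n. r n \<in> {0<..} \<inter> ball 0 (1 / Suc n) - {0}" "\<And>n. f (r n) < c"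
      by metis
    have r0: "\<And>j. 0 < r j" using r(1) by auto
    have r1: "r j < 1 / Suc j" for j
    proof -
      have "0 < r j" "\<bar>r j\<bar> < 1 / Suc j" using r(1)[of j] by (auto simp: dist_real_def)
      then show ?thesis by simp
    qed
    have "approx_modulus p A M \<le> Liminf sequentially (\<lambda>j. f (r j))"
      unfolding f_def by (rule AM_le_seq[OF assms(1,2) B r0 r1])
    also have "\<dots> \<le> Limsup sequentially (\<lambda>j. f (r j))" by (rule Liminf_le_Limsup) simp
    also have "\<dots> \<le> c" by (rule Limsup_bounded) (use r(2) in \<open>auto intro: less_imp_le always_eventually\<close>)
    finally show "approx_modulus p A M \<le> c" .
  qed
qed

end
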